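(* Let $K$ be a polygonal knot with vertices $v_1,\dots,v_n$ and edges $e_1,\dots,e_n$ (indices mod $n$). Then for each $i$, $$MD(e_i,v_{i+2}) \geq \min\{2\,MinRad(K),\,MinEdge(K)\},$$ and in particular, when $angle(v_{i+1})\geq \pi/2$, we have $MD(e_i,v_{i+2}) \geq 2\,MinRad(K)$. Similarly, $MD(e_i,v_{i-1}) \geq \min\{2\,MinRad(K),\,MinEdge(K)\}$, and when $angle(v_{i})\geq \pi/2$, $MD(e_i,v_{i-1}) \geq 2\,MinRad(K)$.
   Context: A polygonal knot $K$ with $n$ edges is given by distinct vertices $v_1,\dots,v_n\in\mathbb{R}^3$ (indices taken mod $n$), with edges $e_i$ the straight segment from $v_i$ to $v_{i+1}$, such that edges meet only at the common vertex of adjacent edges. $|e_i|$ denotes the length of $e_i$; $MinEdge(K)=\min_i|e_i|$. $angle(v_i)\in[0,\pi)$ is the turning angle at $v_i$, i.e. the angle between the vectors $v_i-v_{i-1}$ and $v_{i+1}-v_i$. Define $Rad(v_i)=\dfrac{\min\{|e_{i-1}|,|e_i|\}}{2\tan(angle(v_i)/2)}$ (equal to $+\infty$ if $angle(v_i)=0$) and $MinRad(K)=\min_i Rad(v_i)$. For an edge $e$ and vertex $v$, $MD(e,v)$ denotes the minimum Euclidean distance between the edge $e$ and the point $v$. *)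

theory Defs
  imports "HOL-Analysis.Analysis" "HOL-Library.Extended_Real"
begin

text \<open>A polygonal knot with n edges is given by P :: nat => real^3, vertices P 0, ..., P (n-1).
  Vertex indices are integers taken modulo n.\<close>

definition vx :: "(nat \<Rightarrow> real^3) \<Rightarrow> nat \<Rightarrow> int \<Rightarrow> real^3" where
  "vx P n i = P (nat (i mod int n))"

definition edge :: "(nat \<Rightarrow> real^3) \<Rightarrow> nat \<Rightarrow> int \<Rightarrow> (real^3) set" where
  "edge P n i = closed_segment (vx P n i) (vx P n (i + 1))"

definition edge_len :: "(nat \<Rightarrow> real^3) \<Rightarrow> nat \<Rightarrow> int \<Rightarrow> real" where
  "edge_len P n i = dist (vx P n i) (vx P n (i + 1))"

definition polygonal_knot :: "(nat \<Rightarrow> real^3) \<Rightarrow> nat \<Rightarrow> bool" where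
  "polygonal_knot P n \<longleftrightarrow> n \<ge> 3 \<and> inj_on P {..<n} \<and>
     (\<forall>i j. 0 \<le> i \<and> i < int n \<and> 0 \<le> j \<and> j < int n \<and> i \<noteq> j \<longrightarrow>
        (if j = (i + 1) mod int n then edge P n i \<inter> edge P n j = {vx P n j}
         else if i = (j + 1) mod int n then edge P n i \<inter> edge P n j = {vx P n i}
         else edge P n i \<inter> edge P n j = {}))"

definition vec_angle :: "real^3 \<Rightarrow> real^3 \<Rightarrow> real" where
  "vec_angle a b = arccos ((a \<bullet> b) / (norm a * norm b))"

definition turn_angle :: "(nat \<Rightarrow> real^3) \<Rightarrow> nat \<Rightarrow> int \<Rightarrow> real" where
  "turn_angle P n i = vec_angle (vx P n i - vx P n (i - 1)) (vx P n (i + 1) - vx P n i)"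

definition Rad :: "(nat \<Rightarrow> real^3) \<Rightarrow> nat \<Rightarrow> int \<Rightarrow> ereal" where
  "Rad P n i = (if turn_angle P n i = 0 then \<infinity>
     else ereal (min (edge_len P n (i - 1)) (edge_len P n i) / (2 * tan (turn_angle P n i / 2))))"

definition MinRad :: "(nat \<Rightarrow> real^3) \<Rightarrow> nat \<Rightarrow> ereal" where
  "MinRad P n = Min (Rad P n ` {0..<int n})"

definition MinEdge :: "(nat \<Rightarrow> real^3) \<Rightarrow> nat \<Rightarrow> real" where
  "MinEdge P n = Min (edge_len P n ` {0..<int n})"

definition MD :: "(real^3) set \<Rightarrow> real^3 \<Rightarrow> real" where
  "MD e v = infdist v e"

end

theory Submission
  imports Defs
begin

lemma infdist_geI: "A \<noteq> {} \<Longrightarrow> (\<And>a. a\<in>A \<Longrightarrow> r \<le> dist x a) \<Longrightarrow> r \<le> infdist x A"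
  by (simp add: infdist_notempty cINF_greatest)

lemma seg_param:
  fixes a b c x :: "real^3"
  assumes "x \<in> closed_segment a b"
  obtains s where "0 \<le> s" "s \<le> 1" "c - x = (c - b) + s *\<^sub>R (b - a)"
proof -
  from assms obtain t where t: "0 \<le> t" "t \<le> 1" "x = (1 - t) *\<^sub>R a + t *\<^sub>R b"
    unfolding in_segment by auto
  show ?thesis
    by (rule that[of "1 - t"]) (use t in \<open>auto simp: algebra_simps\<close>)
qed

lemma nb1:
  fixes u w :: "real^3"
  assumes "u \<bullet> w \<ge> 0" "s \<ge> 0"
  shows "norm w \<le> norm (w + s *\<^sub>R u)"
proof -
  have "(norm (w + s *\<^sub>R u))^2 = norm w ^2 + 2 * s * (u \<bullet> w) + s^2 * norm u ^2"
  proof -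
    have "(norm (w + s *\<^sub>R u))^2 = (w + s *\<^sub>R u) \<bullet> (w + s *\<^sub>R u)" by (simp add: power2_norm_eq_inner)
    also have "\<dots> = w \<bullet> w + 2 * s * (u \<bullet> w) + s^2 * (u \<bullet> u)"
      by (simp add: inner_add_left inner_add_right inner_commute power2_eq_square algebra_simps)
    finally show ?thesis by (simp add: dot_square_norm)
  qed
  also have "\<dots> \<ge> norm w ^2" using assms by simp
  finally show ?thesis using power2_le_imp_le by fastforce
qed

lemma nb2:
  fixes u w :: "real^3"
  assumes "u \<noteq> 0"
  shows "norm w ^2 - (u \<bullet> w)^2 / norm u ^2 \<le> norm (w + s *\<^sub>R u) ^2"
proof -
  have nu: "norm u ^2 > 0" using assms by simp
  have e: "(norm (w + s *\<^sub>R u))^2 = norm w ^2 + 2 * s * (u \<bullet> w) + s^2 * norm u ^2"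
  proof -
    have "(norm (w + s *\<^sub>R u))^2 = (w + s *\<^sub>R u) \<bullet> (w + s *\<^sub>R u)" by (simp add: power2_norm_eq_inner)
    also have "\<dots> = w \<bullet> w + 2 * s * (u \<bullet> w) + s^2 * (u \<bullet> u)"
      by (simp add: inner_add_left inner_add_right inner_commute power2_eq_square algebra_simps)
    finally show ?thesis by (simp add: dot_square_norm)
  qed
  have "norm u ^2 * (norm w ^2 + 2 * s * (u \<bullet> w) + s^2 * norm u ^2) - (norm u ^2 * norm w ^2 - (u \<bullet> w)^2)
        = (s * norm u ^2 + u \<bullet> w)^2" by (simp add: algebra_simps power2_eq_square)
  hence "norm u ^2 * norm w ^2 - (u \<bullet> w)^2 \<le> norm u ^2 * (norm w ^2 + 2 * s * (u \<bullet> w) + s^2 * norm u ^2)"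
    by (metis diff_ge_0_iff_ge zero_le_power2)
  hence "(norm u ^2 * norm w ^2 - (u \<bullet> w)^2) / norm u ^2 \<le> norm (w + s *\<^sub>R u) ^2"
    using nu e by (simp add: divide_le_eq mult.commute)
  moreover have "(norm u ^2 * norm w ^2 - (u \<bullet> w)^2) / norm u ^2 = norm w ^2 - (u \<bullet> w)^2 / norm u ^2"
    using nu by (simp add: field_simps)
  ultimately show ?thesis by simp
qed

lemma key1:
  fixes a b c :: "real^3"
  assumes "(b - a) \<bullet> (c - b) \<ge> 0"
  shows "norm (c - b) \<le> infdist c (closed_segment a b)"
proof (rule infdist_geI)
  fix x assume "x \<in> closed_segment a b"
  then obtain s where s: "0 \<le> s" "c - x = (c - b) + s *\<^sub>R (b - a)" by (metis seg_param)
  show "norm (c - b) \<le> dist c x" unfolding dist_norm s(2)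
    by (rule nb1) (use assms s in \<open>auto simp: inner_commute\<close>)
qed auto

lemma key2:
  fixes a b c :: "real^3"
  assumes "vec_angle (b - a) (c - b) \<ge> pi/2"
  shows "min (norm (b-a)) (norm (c-b)) / tan (vec_angle (b - a) (c - b) / 2) \<le> infdist c (closed_segment a b)"
proof (cases "b - a = 0 \<or> c - b = 0")
  case True
  then show ?thesis by (auto simp: infdist_nonneg)
next
  case False
  define u where "u = b - a"
  define w where "w = c - b"
  have u0: "u \<noteq> 0" and w0: "w \<noteq> 0" using False u_def w_def by auto
  define co where "co = (u \<bullet> w) / (norm u * norm w)"
  have np: "norm u * norm w > 0" using u0 w0 by simp
  have cs: "\<bar>u \<bullet> w\<bar> \<le> norm u * norm w" by (rule Cauchy_Schwarz_ineq2)
  have co1: "\<bar>co\<bar> \<le> 1" unfolding co_def using cs np by (simp add: abs_div divide_le_eq_1)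
  have th: "vec_angle u w = arccos co" unfolding vec_angle_def co_def ..
  have co0: "co \<le> 0"
  proof (rule ccontr)
    assume "\<not> co \<le> 0"
    hence "arccos co < arccos 0" using co1 by (intro arccos_less_arccos) auto
    thus False using assms th u_def w_def by simp
  qed
  define sn where "sn = sqrt (1 - co^2)"
  have sn0: "sn \<ge> 0" unfolding sn_def using co1 by (simp add: abs_square_le_1)
  have tanv: "tan (vec_angle u w / 2) = sn / (co + 1)"
    using tan_half[of "vec_angle u w / 2"] th co1 by (simp add: sin_arccos_abs sn_def)
  define m where "m = min (norm u) (norm w)"
  have step1: "m / tan (vec_angle u w / 2) \<le> norm w * sn"
  proof (cases "sn = 0")
    case True then show ?thesis by (simp add: tanv)
  next
    case False
    hence snp: "sn > 0" using sn0 by simp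
    have cop: "co + 1 > 0"
    proof (rule ccontr)
      assume "\<not> co + 1 > 0" hence "co = -1" using co1 by auto
      thus False using False sn_def by simp
    qed
    have "m / tan (vec_angle u w / 2) = m * (co + 1) / sn" using tanv by simp
    also have "\<dots> \<le> norm w * sn"
    proof -
      have "sn * sn = 1 - co^2"
      proof -
        have "1 - co^2 \<ge> 0" using co1 by (simp add: abs_square_le_1)
        thus ?thesis by (simp add: sn_def)
      qed
      have "m * (co + 1) \<le> norm w * (co + 1)" using cop by (simp add: m_def)
      also have "\<dots> \<le> norm w * (co + 1) * (1 - co)" 
      proof -
        have "0 \<le> norm w * (co + 1)" using cop by simp
        hence "norm w * (co + 1) * 1 \<le> norm w * (co + 1) * (1 - co)"
          using co0 by (intro mult_left_mono) auto
        thus ?thesis by simp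
      qed
      also have "\<dots> = norm w * (sn * sn)" by (subst \<open>sn * sn = 1 - co^2\<close>) (simp add: algebra_simps power2_eq_square)
      finally show ?thesis using snp by (simp add: divide_le_eq)
    qed
    finally show ?thesis .
  qed
  have step2: "norm w * sn \<le> infdist c (closed_segment a b)"
  proof (rule infdist_geI)
    fix x assume "x \<in> closed_segment a b"
    then obtain s where s: "c - x = w + s *\<^sub>R u" unfolding u_def w_def by (metis seg_param)
    have "(norm w * sn)^2 = norm w ^2 * (1 - co^2)"
      unfolding sn_def using co1 by (simp add: power_mult_distrib abs_square_le_1)
    also have "\<dots> = norm w ^2 - (u \<bullet> w)^2 / norm u ^2"
      unfolding co_def using u0 w0 by (simp add: field_simps power2_eq_square)
    also have "\<dots> \<le> norm (w + s *\<^sub>R u) ^2" by (rule nb2[OF u0])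
    finally have "(norm w * sn)^2 \<le> (dist c x)^2" by (simp add: dist_norm s)
    thus "norm w * sn \<le> dist c x" using power2_le_imp_le by fastforce
  qed auto
  show ?thesis using step1 step2 unfolding u_def w_def m_def by linarith
qed

lemma side:
  fixes a b c :: "real^3" and MR R :: ereal
  assumes R: "R = (if vec_angle (b-a) (c-b) = 0 then \<infinity> else ereal (min (norm(b-a)) (norm(c-b)) / (2*tan(vec_angle (b-a) (c-b)/2))))"
    and MR: "MR \<le> R" and ME: "ME \<le> norm (c-b)"
  shows "vec_angle (b-a) (c-b) \<ge> pi/2 \<Longrightarrow> 2*MR \<le> ereal (infdist c (closed_segment a b))"
    and "min (2*MR) (ereal ME) \<le> ereal (infdist c (closed_segment a b))"
proof -
  show A: "2*MR \<le> ereal (infdist c (closed_segment a b))" if th: "vec_angle (b-a) (c-b) \<ge> pi/2"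
  proof -
    have "vec_angle (b-a) (c-b) \<noteq> 0" using th pi_gt_zero by linarith
    hence "R = ereal (min (norm(b-a)) (norm(c-b)) / (2*tan(vec_angle (b-a) (c-b)/2)))" using R by simp
    hence "2 * R = ereal (min (norm(b-a)) (norm(c-b)) / tan(vec_angle (b-a) (c-b)/2))" by simp
    also have "\<dots> \<le> ereal (infdist c (closed_segment a b))" using key2[OF th] by simp
    finally have "2 * R \<le> ereal (infdist c (closed_segment a b))" .
    moreover have "2 * MR \<le> 2 * R" using MR by (simp add: ereal_mult_left_mono)
    ultimately show ?thesis by (rule order_trans[rotated])
  qed
  show "min (2*MR) (ereal ME) \<le> ereal (infdist c (closed_segment a b))"
  proof (cases "(b - a) \<bullet> (c - b) \<ge> 0")
    case True
    then have "ME \<le> infdist c (closed_segment a b)" using key1 ME by (meson order_trans)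
    then show ?thesis by (simp add: min.coboundedI2)
  next
    case False
    define co where "co = ((b-a) \<bullet> (c-b)) / (norm (b-a) * norm (c-b))"
    have nz: "b - a \<noteq> 0" "c - b \<noteq> 0" using False by auto
    have dp: "norm (b-a) * norm (c-b) > 0" using nz by simp
    have co0: "co < 0" using False dp unfolding co_def
      by (simp add: divide_neg_pos)
    have cs: "\<bar>(b-a) \<bullet> (c-b)\<bar> \<le> norm (b-a) * norm (c-b)" by (rule Cauchy_Schwarz_ineq2)
    have co1: "-1 \<le> co" unfolding co_def using cs dp
      by (simp add: le_divide_eq abs_le_iff)
    have "arccos 0 < arccos co" using co0 co1 by (intro arccos_less_arccos) auto
    hence "vec_angle (b-a) (c-b) \<ge> pi/2" unfolding vec_angle_def co_def by simp
    from A[OF this] show ?thesis by (simp add: min.coboundedI1)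
  qed
qed

lemma vx_mod1: "vx P n (j mod int n) = vx P n j"
  by (simp add: vx_def)
lemma vx_mod2: "vx P n (j mod int n + k) = vx P n (j + k)"
  by (simp add: vx_def mod_add_left_eq)
lemma vx_mod3: "vx P n (j mod int n - k) = vx P n (j - k)"
  by (simp add: vx_def mod_diff_left_eq)

lemma Rad_mod: "Rad P n (j mod int n) = Rad P n j"
  unfolding Rad_def turn_angle_def edge_len_def by (simp add: vx_mod1 vx_mod2 vx_mod3)

lemma edge_len_mod: "edge_len P n (j mod int n) = edge_len P n j"
  unfolding edge_len_def by (simp add: vx_mod1 vx_mod2)

lemma MinRad_le: "n > 0 \<Longrightarrow> MinRad P n \<le> Rad P n j"
proof -
  assume n0: "n > 0"
  have "j mod int n \<in> {0..<int n}" using n0 by simp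
  hence "Rad P n (j mod int n) \<in> Rad P n ` {0..<int n}" by blast
  hence "Min (Rad P n ` {0..<int n}) \<le> Rad P n (j mod int n)" by (intro Min_le) auto
  thus ?thesis unfolding MinRad_def Rad_mod .
qed

lemma MinEdge_le: "n > 0 \<Longrightarrow> MinEdge P n \<le> edge_len P n j"
proof -
  assume n0: "n > 0"
  have "j mod int n \<in> {0..<int n}" using n0 by simp
  hence "edge_len P n (j mod int n) \<in> edge_len P n ` {0..<int n}" by blast
  hence "Min (edge_len P n ` {0..<int n}) \<le> edge_len P n (j mod int n)" by (intro Min_le) auto
  thus ?thesis unfolding MinEdge_def edge_len_mod .
qed

lemma vec_angle_swap: "vec_angle x y = vec_angle (-y) (-x)"
  unfolding vec_angle_def by (simp add: inner_commute mult.commute)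

theorem lemma3p3:
  fixes P :: "nat \<Rightarrow> real^3" and n :: nat and i :: int
  assumes "polygonal_knot P n"
  shows "ereal (MD (edge P n i) (vx P n (i + 2))) \<ge> min (2 * MinRad P n) (ereal (MinEdge P n))
     \<and> (turn_angle P n (i + 1) \<ge> pi / 2 \<longrightarrow> ereal (MD (edge P n i) (vx P n (i + 2))) \<ge> 2 * MinRad P n)
     \<and> ereal (MD (edge P n i) (vx P n (i - 1))) \<ge> min (2 * MinRad P n) (ereal (MinEdge P n))
     \<and> (turn_angle P n i \<ge> pi / 2 \<longrightarrow> ereal (MD (edge P n i) (vx P n (i - 1))) \<ge> 2 * MinRad P n)"
proof -
  have n0: "n > 0" using assms unfolding polygonal_knot_def by simp
  define a where "a = vx P n i"
  define b where "b = vx P n (i + 1)"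
  define c where "c = vx P n (i + 2)"
  define d where "d = vx P n (i - 1)"
  have i2: "i + 1 + 1 = i + 2" by simp
  have ta1: "turn_angle P n (i + 1) = vec_angle (b - a) (c - b)"
    unfolding turn_angle_def a_def b_def c_def i2 by simp
  have R1: "Rad P n (i + 1) = (if vec_angle (b-a) (c-b) = 0 then \<infinity> else ereal (min (norm(b-a)) (norm(c-b)) / (2*tan(vec_angle (b-a) (c-b)/2))))"
    unfolding Rad_def ta1 unfolding edge_len_def a_def b_def c_def i2 by (simp add: dist_norm norm_minus_commute)
  have E1: "MinEdge P n \<le> norm (c - b)"
    using MinEdge_le[OF n0, of P "i + 1"] unfolding edge_len_def b_def c_def i2 by (simp add: dist_norm norm_minus_commute)
  have ta2: "turn_angle P n i = vec_angle (a - b) (d - a)"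
    unfolding turn_angle_def a_def b_def d_def by (subst vec_angle_swap) simp
  have R2: "Rad P n i = (if vec_angle (a-b) (d-a) = 0 then \<infinity> else ereal (min (norm(a-b)) (norm(d-a)) / (2*tan(vec_angle (a-b) (d-a)/2))))"
    unfolding Rad_def ta2 unfolding edge_len_def a_def b_def d_def by (simp add: dist_norm norm_minus_commute min.commute)
  have E2: "MinEdge P n \<le> norm (d - a)"
    using MinEdge_le[OF n0, of P "i - 1"] unfolding edge_len_def a_def d_def by (simp add: dist_norm norm_minus_commute)
  have ed1: "edge P n i = closed_segment a b" unfolding edge_def a_def b_def ..
  have ed2: "edge P n i = closed_segment b a" unfolding ed1 by (rule closed_segment_commute)
  note s1 = side[OF R1 MinRad_le[OF n0] E1]
  note s2 = side[OF R2 MinRad_le[OF n0] E2]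
  show ?thesis
    unfolding MD_def ta1 ta2
    using s1 s2 unfolding ed1[symmetric] ed2[symmetric] c_def d_def by blast
qed

end
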